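(* Let $\mathbf{L}=\mathbf{B}+\mathbb{N}(\mathbf{F})\subseteq\mathbb{N}^n$ with $\mathbf{B},\mathbf{F}$ finite, such that $\mathbf{b}-\mathbf{b}'\in\mathbb{Z}(\mathbf{F})$ for all $\mathbf{b},\mathbf{b}'\in\mathbf{B}$ (a representation witnessing that $\mathbf{L}$ is directed hybridlinear). Then $\mathrm{Pumps}(\mathbf{L})=\mathbb{Q}_{\ge0}(\mathbf{F})\cap\mathbb{Z}(\mathbf{F})$.
   Context: $\mathbb{S}(\mathbf{F})=\{\sum_{i=1}^m\lambda_i\mathbf{f}_i\mid m\in\mathbb{N},\mathbf{f}_i\in\mathbf{F},\lambda_i\in\mathbb{S}\}$ for $\mathbb{S}\in\{\mathbb{N},\mathbb{Z},\mathbb{Q}_{\ge0}\}$. For $\mathbf{X}\subseteq\mathbb{N}^n$, a vector $\mathbf{v}\in\mathbb{N}^n$ is a pump of $\mathbf{X}$ if there is a point $\mathbf{x}$ with $\mathbf{x}+\mathbb{N}\mathbf{v}\subseteq\mathbf{X}$; $\mathrm{Pumps}(\mathbf{X})$ is the set of all pumps. *)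

theory Defs
  imports Complex_Main
begin

text \<open>Vectors in dimension n are functions from a finite index type 'n.
  S(F): all finite combinations sum_{i<m} c_i f_i with f_i in F and c_i in S.\<close>

definition combs :: "'a::comm_semiring_1 set \<Rightarrow> ('n \<Rightarrow> 'a) set \<Rightarrow> ('n \<Rightarrow> 'a) set" where
  "combs S F = {v. \<exists>(m::nat) f c. (\<forall>i<m. f i \<in> F \<and> c i \<in> S) \<and>
                     v = (\<lambda>j. \<Sum>i<m. c i * f i j)}"

definition embed :: "('n \<Rightarrow> nat) \<Rightarrow> ('n \<Rightarrow> 'a::semiring_1)" where
  "embed v = (\<lambda>j. of_nat (v j))"

definition NComb :: "('n \<Rightarrow> nat) set \<Rightarrow> ('n \<Rightarrow> nat) set" where
  "NComb F = combs UNIV F"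

definition ZComb :: "('n \<Rightarrow> nat) set \<Rightarrow> ('n \<Rightarrow> int) set" where
  "ZComb F = combs UNIV (embed ` F)"

definition QComb :: "('n \<Rightarrow> nat) set \<Rightarrow> ('n \<Rightarrow> rat) set" where
  "QComb F = combs {q. q \<ge> 0} (embed ` F)"

definition Pumps :: "('n \<Rightarrow> nat) set \<Rightarrow> ('n \<Rightarrow> nat) set" where
  "Pumps X = {v. \<exists>x. \<forall>k::nat. (\<lambda>j. x j + k * v j) \<in> X}"

end

theory Submission
  imports Defs "HOL-Library.Ramsey"
begin

lemma sum_closed:
  assumes "finite A" "0 \<in> S" "\<forall>a\<in>S. \<forall>b\<in>S. a + b \<in> S" "\<forall>x\<in>A. g x \<in> S"
  shows "sum g A \<in> S"
  using assms by (induction A rule: finite_induct) auto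

lemma combs_fin:
  fixes F :: "('n \<Rightarrow> 'a::comm_semiring_1) set"
  assumes fin: "finite F" and z: "0 \<in> S" and cl: "\<forall>a\<in>S. \<forall>b\<in>S. a + b \<in> S"
  shows "v \<in> combs S F \<longleftrightarrow> (\<exists>\<mu>. (\<forall>f\<in>F. \<mu> f \<in> S) \<and> v = (\<lambda>j. \<Sum>f\<in>F. \<mu> f * f j))"
proof
  assume "v \<in> combs S F"
  then obtain m :: nat and g :: "nat \<Rightarrow> 'n \<Rightarrow> 'a" and c :: "nat \<Rightarrow> 'a" where gc: "\<forall>i<m. g i \<in> F \<and> c i \<in> S" and v: "v = (\<lambda>j. \<Sum>i<m. c i * g i j)"
    unfolding combs_def by blast
  define \<mu> where "\<mu> f = sum c {i. i \<in> {..<m} \<and> g i = f}" for f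
  have "\<forall>f\<in>F. \<mu> f \<in> S" unfolding \<mu>_def
    by (intro ballI sum_closed[OF _ z cl]) (use gc in auto)
  moreover have "v = (\<lambda>j. \<Sum>f\<in>F. \<mu> f * f j)"
  proof
    fix j
    have "v j = (\<Sum>f\<in>F. \<Sum>i\<in>{i. i \<in> {..<m} \<and> g i = f}. c i * g i j)"
      unfolding v by (rule sum.group[symmetric]) (use fin gc in auto)
    also have "\<dots> = (\<Sum>f\<in>F. \<mu> f * f j)"
      unfolding \<mu>_def sum_distrib_right by (intro sum.cong) auto
    finally show "v j = (\<Sum>f\<in>F. \<mu> f * f j)" .
  qed
  ultimately show "\<exists>\<mu>. (\<forall>f\<in>F. \<mu> f \<in> S) \<and> v = (\<lambda>j. \<Sum>f\<in>F. \<mu> f * f j)" by blast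
next
  assume "\<exists>\<mu>. (\<forall>f\<in>F. \<mu> f \<in> S) \<and> v = (\<lambda>j. \<Sum>f\<in>F. \<mu> f * f j)"
  then obtain \<mu> where mu: "\<forall>f\<in>F. \<mu> f \<in> S" and v: "v = (\<lambda>j. \<Sum>f\<in>F. \<mu> f * f j)" by blast
  obtain h where h: "bij_betw h {0..<card F} F" using ex_bij_betw_nat_finite[OF fin] by blast
  have hF: "\<forall>i<card F. h i \<in> F" using h by (auto simp: bij_betw_def)
  have "v = (\<lambda>j. \<Sum>i<card F. \<mu> (h i) * h i j)"
    unfolding v lessThan_atLeast0 by (rule ext, rule sum.reindex_bij_betw[OF h, symmetric])
  then show "v \<in> combs S F" unfolding combs_def using hF mu
    by (intro CollectI exI[of _ "card F"] exI[of _ h] exI[of _ "\<lambda>i. \<mu> (h i)"]) auto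
qed

lemma inj_embed: "inj (embed :: ('n \<Rightarrow> nat) \<Rightarrow> ('n \<Rightarrow> 'a::semiring_char_0))"
  unfolding embed_def inj_def by (auto simp: fun_eq_iff)

lemma NComb_iff:
  assumes "finite F"
  shows "u \<in> NComb F \<longleftrightarrow> (\<exists>\<mu>. u = (\<lambda>j. \<Sum>f\<in>F. \<mu> f * f j))"
  unfolding NComb_def using combs_fin[OF assms, of UNIV u] by simp

lemma embed_sum:
  fixes F :: "('n \<Rightarrow> nat) set"
  shows "(\<Sum>g\<in>embed ` F. \<mu> g * (g j :: 'a::{semiring_char_0,comm_semiring_1})) =
         (\<Sum>f\<in>F. \<mu> (embed f) * of_nat (f j))"
  by (subst sum.reindex) (auto intro: inj_on_subset[OF inj_embed] simp: embed_def)

lemma ZComb_iff: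
  fixes F :: "('n \<Rightarrow> nat) set"
  assumes "finite F"
  shows "z \<in> ZComb F \<longleftrightarrow> (\<exists>\<mu>. z = (\<lambda>j. \<Sum>f\<in>F. \<mu> f * int (f j)))"
proof -
  have "z \<in> ZComb F \<longleftrightarrow> (\<exists>\<mu>. z = (\<lambda>j. \<Sum>g\<in>embed ` F. \<mu> g * g j))"
    unfolding ZComb_def using combs_fin[of "embed ` F" UNIV z] assms by simp
  also have "\<dots> \<longleftrightarrow> (\<exists>\<mu>. z = (\<lambda>j. \<Sum>f\<in>F. \<mu> (embed f :: 'n \<Rightarrow> int) * int (f j)))"
    unfolding embed_sum by simp
  also have "\<dots> \<longleftrightarrow> (\<exists>\<mu>. z = (\<lambda>j. \<Sum>f\<in>F. \<mu> f * int (f j)))"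
  proof
    assume "\<exists>\<mu>. z = (\<lambda>j. \<Sum>f\<in>F. \<mu> (embed f :: 'n \<Rightarrow> int) * int (f j))"
    then obtain \<mu> where "z = (\<lambda>j. \<Sum>f\<in>F. \<mu> (embed f :: 'n \<Rightarrow> int) * int (f j))" by blast
    then show "\<exists>\<mu>. z = (\<lambda>j. \<Sum>f\<in>F. \<mu> f * int (f j))" by (intro exI[of _ "\<mu> \<circ> embed"]) simp
  next
    assume "\<exists>\<mu>. z = (\<lambda>j. \<Sum>f\<in>F. \<mu> f * int (f j))"
    then obtain \<mu> where "z = (\<lambda>j. \<Sum>f\<in>F. \<mu> f * int (f j))" by blast
    then show "\<exists>\<mu>. z = (\<lambda>j. \<Sum>f\<in>F. \<mu> (embed f :: 'n \<Rightarrow> int) * int (f j))"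
      by (intro exI[of _ "\<lambda>g. \<mu> (inv (embed :: ('n \<Rightarrow> nat) \<Rightarrow> 'n \<Rightarrow> int) g)"])
         (simp add: inv_f_f[OF inj_embed])
  qed
  finally show ?thesis .
qed

lemma QComb_iff:
  fixes F :: "('n \<Rightarrow> nat) set"
  assumes "finite F"
  shows "q \<in> QComb F \<longleftrightarrow> (\<exists>\<mu>. (\<forall>f\<in>F. \<mu> f \<ge> 0) \<and> q = (\<lambda>j. \<Sum>f\<in>F. \<mu> f * of_nat (f j)))"
proof -
  have "q \<in> QComb F \<longleftrightarrow> (\<exists>\<mu>. (\<forall>g\<in>embed ` F. \<mu> g \<ge> 0) \<and> q = (\<lambda>j. \<Sum>g\<in>embed ` F. \<mu> g * g j))"
    unfolding QComb_def using combs_fin[of "embed ` F" "{q. q \<ge> 0}" q] assms by simp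
  also have "\<dots> \<longleftrightarrow> (\<exists>\<mu>. (\<forall>f\<in>F. \<mu> (embed f :: 'n \<Rightarrow> rat) \<ge> 0) \<and> q = (\<lambda>j. \<Sum>f\<in>F. \<mu> (embed f :: 'n \<Rightarrow> rat) * of_nat (f j)))"
    unfolding embed_sum by simp
  also have "\<dots> \<longleftrightarrow> (\<exists>\<mu>. (\<forall>f\<in>F. \<mu> f \<ge> 0) \<and> q = (\<lambda>j. \<Sum>f\<in>F. \<mu> f * of_nat (f j)))"
  proof
    assume "\<exists>\<mu>. (\<forall>f\<in>F. \<mu> (embed f :: 'n \<Rightarrow> rat) \<ge> 0) \<and> q = (\<lambda>j. \<Sum>f\<in>F. \<mu> (embed f :: 'n \<Rightarrow> rat) * of_nat (f j))"
    then obtain \<mu> where mu: "\<forall>f\<in>F. \<mu> (embed f :: 'n \<Rightarrow> rat) \<ge> 0" "q = (\<lambda>j. \<Sum>f\<in>F. \<mu> (embed f :: 'n \<Rightarrow> rat) * of_nat (f j))" by blast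
    then show "\<exists>\<mu>. (\<forall>f\<in>F. \<mu> f \<ge> 0) \<and> q = (\<lambda>j. \<Sum>f\<in>F. \<mu> f * of_nat (f j))"
      by (intro exI[of _ "\<mu> \<circ> embed"]) simp
  next
    assume "\<exists>\<mu>. (\<forall>f\<in>F. \<mu> f \<ge> 0) \<and> q = (\<lambda>j. \<Sum>f\<in>F. \<mu> f * of_nat (f j))"
    then obtain \<mu> where mu: "\<forall>f\<in>F. \<mu> f \<ge> 0" "q = (\<lambda>j. \<Sum>f\<in>F. \<mu> f * of_nat (f j))" by blast
    then show "\<exists>\<mu>. (\<forall>f\<in>F. \<mu> (embed f :: 'n \<Rightarrow> rat) \<ge> 0) \<and> q = (\<lambda>j. \<Sum>f\<in>F. \<mu> (embed f :: 'n \<Rightarrow> rat) * of_nat (f j))"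
      by (intro exI[of _ "\<lambda>g. \<mu> (inv (embed :: ('n \<Rightarrow> nat) \<Rightarrow> 'n \<Rightarrow> rat) g)"])
         (simp add: inv_f_f[OF inj_embed])
  qed
  finally show ?thesis .
qed


lemma no_inf_desc:
  fixes h :: "nat \<Rightarrow> nat"
  assumes inf: "infinite (Y::nat set)" and desc: "\<forall>i\<in>Y. \<forall>j\<in>Y. i < j \<longrightarrow> h j < h i"
  shows False
proof -
  define e where "e = enumerate Y"
  have step: "h (e (Suc n)) < h (e n)" for n
    using desc enumerate_in_set[OF inf] enumerate_mono[OF lessI inf] unfolding e_def by blast
  have "h (e n) + n \<le> h (e 0)" for n
  proof (induction n)
    case (Suc n) then show ?case using step[of n] by simp
  qed simp
  from this[of "Suc (h (e 0))"] show False by simp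
qed

lemma dickson:
  fixes \<mu> :: "nat \<Rightarrow> 'b \<Rightarrow> nat"
  assumes "finite G" and "infinite (Z::nat set)"
  shows "\<exists>Y\<subseteq>Z. infinite Y \<and> (\<forall>i\<in>Y. \<forall>j\<in>Y. i < j \<longrightarrow> (\<forall>g\<in>G. \<mu> i g \<le> \<mu> j g))"
  using assms(1)
proof (induction G rule: finite_induct)
  case empty then show ?case using assms(2) by (intro exI[of _ Z]) simp
next
  case (insert g G)
  then obtain Y where Y: "Y \<subseteq> Z" "infinite Y" "\<forall>i\<in>Y. \<forall>j\<in>Y. i < j \<longrightarrow> (\<forall>g\<in>G. \<mu> i g \<le> \<mu> j g)"
    by blast
  define col where "col X = (if \<mu> (Min X) g \<le> \<mu> (Max X) g then 0 else (1::nat))" for X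
  have "\<forall>x\<in>Y. \<forall>y\<in>Y. x \<noteq> y \<longrightarrow> col {x, y} < 2" unfolding col_def by auto
  from Ramsey2[OF Y(2) this] obtain Y' t where Y': "Y' \<subseteq> Y" "infinite Y'" "t < 2"
    "\<forall>x\<in>Y'. \<forall>y\<in>Y'. x \<noteq> y \<longrightarrow> col {x, y} = t" by blast
  have colij: "col {i, j} = (if \<mu> i g \<le> \<mu> j g then 0 else 1)" if "i < j" for i j
    using that unfolding col_def by (simp add: min_def max_def)
  show ?case
  proof (cases "t = 0")
    case True
    have "\<forall>i\<in>Y'. \<forall>j\<in>Y'. i < j \<longrightarrow> (\<forall>g'\<in>insert g G. \<mu> i g' \<le> \<mu> j g')"
    proof (intro ballI impI)
      fix i j g' assume ij: "i \<in> Y'" "j \<in> Y'" "i < j" and g': "g' \<in> insert g G"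
      have "col {i,j} = t" using Y'(4)[rule_format, OF ij(1,2)] ij(3) by simp
      then have "col {i,j} = 0" using True by simp
      then have "\<mu> i g \<le> \<mu> j g" using colij[OF ij(3)] by (auto split: if_splits)
      then show "\<mu> i g' \<le> \<mu> j g'" using g' Y(3) Y'(1) ij by auto
    qed
    moreover have "Y' \<subseteq> Z" using Y'(1) Y(1) by blast
    ultimately show ?thesis using Y'(2) by (intro exI[of _ Y'] conjI)
  next
    case False
    then have "t = 1" using Y'(3) by simp
    have "\<forall>i\<in>Y'. \<forall>j\<in>Y'. i < j \<longrightarrow> \<mu> j g < \<mu> i g"
    proof (intro ballI impI)
      fix i j assume ij: "i \<in> Y'" "j \<in> Y'" "i < j"
      have "col {i,j} = t" using Y'(4)[rule_format, OF ij(1,2)] ij(3) by simp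
      show "\<mu> j g < \<mu> i g"
      proof (rule ccontr)
        assume "\<not> \<mu> j g < \<mu> i g"
        then have "\<mu> i g \<le> \<mu> j g" by simp
        then have "col {i,j} = 0" using colij[OF ij(3)] by simp
        with \<open>col {i,j} = t\<close> \<open>t = 1\<close> show False by simp
      qed
    qed
    from no_inf_desc[OF Y'(2) this] show ?thesis by (rule FalseE)
  qed
qed


lemma pumps_sub:
  fixes B F :: "('n::finite \<Rightarrow> nat) set" and L :: "('n \<Rightarrow> nat) set"
  assumes finB: "finite B" and finF: "finite F"
    and L: "L = {(\<lambda>j. b j + u j) | b u. b \<in> B \<and> u \<in> NComb F}"
    and dif: "\<forall>b\<in>B. \<forall>b'\<in>B. (\<lambda>j. int (b j) - int (b' j)) \<in> ZComb F"
    and v: "v \<in> Pumps L"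
  shows "(embed v :: 'n \<Rightarrow> int) \<in> ZComb F \<and> (\<lambda>j. rat_of_int (embed v j)) \<in> QComb F"
proof -
  obtain x where x: "\<forall>k::nat. (\<lambda>j. x j + k * v j) \<in> L" using v unfolding Pumps_def by blast
  have "\<forall>k. \<exists>b \<mu>. b \<in> B \<and> (\<lambda>j. x j + k * v j) = (\<lambda>j. b j + (\<Sum>f\<in>F. \<mu> f * f j))"
  proof
    fix k :: nat
    from x have "(\<lambda>j. x j + k * v j) \<in> L" by blast
    then obtain b u where bu: "b \<in> B" "u \<in> NComb F" "(\<lambda>j. x j + k * v j) = (\<lambda>j. b j + u j)"
      unfolding L by blast
    obtain \<mu> where "u = (\<lambda>j. \<Sum>f\<in>F. \<mu> f * f j)" using NComb_iff[OF finF] bu(2) by blast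
    with bu show "\<exists>b \<mu>. b \<in> B \<and> (\<lambda>j. x j + k * v j) = (\<lambda>j. b j + (\<Sum>f\<in>F. \<mu> f * f j))"
      by (intro exI[of _ b] exI[of _ \<mu>]) simp
  qed
  then have "\<exists>bb. \<forall>k. \<exists>\<mu>. bb k \<in> B \<and> (\<lambda>j. x j + k * v j) = (\<lambda>j. bb k j + (\<Sum>f\<in>F. \<mu> f * f j))"
    by (rule choice)
  then obtain bb where "\<forall>k. \<exists>\<mu>. bb k \<in> B \<and> (\<lambda>j. x j + k * v j) = (\<lambda>j. bb k j + (\<Sum>f\<in>F. \<mu> f * f j))"
    by blast
  then have "\<exists>mm. \<forall>k. bb k \<in> B \<and> (\<lambda>j. x j + k * v j) = (\<lambda>j. bb k j + (\<Sum>f\<in>F. mm k f * f j))"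
    by (rule choice)
  then obtain mm where bm: "\<forall>k. bb k \<in> B \<and> (\<lambda>j. x j + k * v j) = (\<lambda>j. bb k j + (\<Sum>f\<in>F. mm k f * f j))"
    by blast
  have bbB: "bb k \<in> B" for k using spec[OF bm, of k] by (rule conjunct1)
  have bmj: "x j + k * v j = bb k j + (\<Sum>f\<in>F. mm k f * f j)" for k j
  proof -
    have "(\<lambda>j. x j + k * v j) = (\<lambda>j. bb k j + (\<Sum>f\<in>F. mm k f * f j))"
      using spec[OF bm, of k] by (rule conjunct2)
    from fun_cong[OF this, of j] show ?thesis .
  qed
  obtain c where c: "(\<lambda>j. int (bb 1 j) - int (bb 0 j)) = (\<lambda>j. \<Sum>f\<in>F. c f * int (f j))"
  proof -
    have "(\<lambda>j. int (bb 1 j) - int (bb 0 j)) \<in> ZComb F" using dif bbB[where k=0] bbB[where k=1] by blast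
    then show ?thesis using that unfolding ZComb_iff[OF finF] by blast
  qed
  have Z: "(embed v :: 'n \<Rightarrow> int) \<in> ZComb F"
    unfolding ZComb_iff[OF finF]
  proof (intro exI[of _ "\<lambda>f. c f + int (mm 1 f) - int (mm 0 f)"] ext)
    fix j
    have e0: "int (x j) = int (bb 0 j) + (\<Sum>f\<in>F. int (mm 0 f) * int (f j))"
      using arg_cong[OF bmj[where k=0 and j=j], of int] by simp
    have e1: "int (x j) + int (v j) = int (bb 1 j) + (\<Sum>f\<in>F. int (mm 1 f) * int (f j))"
      using arg_cong[OF bmj[where k=1 and j=j], of int] by simp
    have lj: "int (bb 1 j) - int (bb 0 j) = (\<Sum>f\<in>F. c f * int (f j))"
      using fun_cong[OF c, of j] by simp
    have "(\<Sum>f\<in>F. (c f + int (mm 1 f) - int (mm 0 f)) * int (f j)) =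
      (\<Sum>f\<in>F. c f * int (f j)) + (\<Sum>f\<in>F. int (mm 1 f) * int (f j)) - (\<Sum>f\<in>F. int (mm 0 f) * int (f j))"
      by (simp add: algebra_simps sum.distrib sum_subtractf)
    then show "embed v j = (\<Sum>f\<in>F. (c f + int (mm 1 f) - int (mm 0 f)) * int (f j))"
      using e0 e1 lj unfolding embed_def by linarith
  qed
  have "finite (range bb)" using bbB finB by (metis finite_subset image_subsetI)
  then obtain b where b: "infinite (bb -` {b})" using inf_img_fin_dom[OF _ infinite_UNIV_nat] by blast
  obtain Y where Y: "Y \<subseteq> bb -` {b}" "infinite Y" "\<forall>i\<in>Y. \<forall>j\<in>Y. i < j \<longrightarrow> (\<forall>f\<in>F. mm i f \<le> mm j f)"
    using dickson[OF finF b, of mm] by blast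
  obtain i where i: "i \<in> Y" using Y(2) by (metis finite.emptyI ex_in_conv)
  obtain j where j: "j > i" "j \<in> Y" using Y(2) unfolding infinite_nat_iff_unbounded by blast
  have bi: "bb i = b" and bj: "bb j = b" using Y(1) i j by auto
  have mono: "\<forall>f\<in>F. mm i f \<le> mm j f" using Y(3) i j by blast
  define d where "d = j - i"
  have d: "d > 0" "j = i + d" using j unfolding d_def by auto
  have key: "d * v l = (\<Sum>f\<in>F. (mm j f - mm i f) * f l)" for l
  proof -
    have s: "(\<Sum>f\<in>F. mm j f * f l) = (\<Sum>f\<in>F. mm i f * f l) + (\<Sum>f\<in>F. (mm j f - mm i f) * f l)"
      unfolding sum.distrib[symmetric]
      by (rule sum.cong) (use mono in \<open>auto simp: add_mult_distrib[symmetric]\<close>)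
    have "j * v l = i * v l + d * v l" using d(2) by (simp add: add_mult_distrib)
    moreover have "bb i l = bb j l" using bi bj by simp
    ultimately show ?thesis using bmj[where k=i and j=l] bmj[where k=j and j=l] s by linarith
  qed
  have Q: "(\<lambda>l. rat_of_int (embed v l)) \<in> QComb F"
    unfolding QComb_iff[OF finF]
  proof (intro exI[of _ "\<lambda>f. of_nat (mm j f - mm i f) / of_nat d"] conjI ballI ext)
    fix f show "0 \<le> rat_of_nat (mm j f - mm i f) / rat_of_nat d" by simp
  next
    fix l
    have k: "of_nat d * rat_of_nat (v l) = (\<Sum>f\<in>F. of_nat (mm j f - mm i f) * of_nat (f l))"
      using arg_cong[OF key[of l], of rat_of_nat] by simp
    have "(\<Sum>f\<in>F. of_nat (mm j f - mm i f) / of_nat d * rat_of_nat (f l)) =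
          (\<Sum>f\<in>F. of_nat (mm j f - mm i f) * of_nat (f l)) / of_nat d"
      by (simp add: sum_divide_distrib)
    also have "\<dots> = rat_of_nat (v l)" unfolding k[symmetric] using d(1) by simp
    finally show "rat_of_int (embed v l) = (\<Sum>f\<in>F. of_nat (mm j f - mm i f) / of_nat d * rat_of_nat (f l))"
      by (simp add: embed_def)
  qed
  from Z Q show ?thesis by blast
qed


lemma pumps_sup:
  fixes B F :: "('n::finite \<Rightarrow> nat) set" and L :: "('n \<Rightarrow> nat) set"
  assumes finF: "finite F" and b0: "b0 \<in> B"
    and L: "L = {(\<lambda>j. b j + u j) | b u. b \<in> B \<and> u \<in> NComb F}"
    and zZ: "z \<in> ZComb F" and zQ: "(\<lambda>j. rat_of_int (z j)) \<in> QComb F"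
  shows "z \<in> embed ` Pumps L"
proof -
  obtain c where c: "z = (\<lambda>j. \<Sum>f\<in>F. c f * int (f j))" using zZ unfolding ZComb_iff[OF finF] by blast
  obtain q where q: "\<forall>f\<in>F. q f \<ge> 0" "(\<lambda>j. rat_of_int (z j)) = (\<lambda>j. \<Sum>f\<in>F. q f * of_nat (f j))"
    using zQ unfolding QComb_iff[OF finF] by blast
  have qj: "rat_of_int (z j) = (\<Sum>f\<in>F. q f * of_nat (f j))" for j using fun_cong[OF q(2), of j] by simp
  have znn: "z j \<ge> 0" for j
  proof -
    have "rat_of_int (z j) \<ge> 0" unfolding qj using q(1) by (intro sum_nonneg) simp
    then show ?thesis by simp
  qed
  define v where "v j = nat (z j)" for j
  have zv: "z = embed v" unfolding embed_def v_def using znn by (simp add: fun_eq_iff)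
  have "\<forall>f\<in>F. \<exists>d. d > 0 \<and> (\<exists>n. q f * of_nat d = of_nat n)"
  proof
    fix f assume f: "f \<in> F"
    obtain a b where ab: "quotient_of (q f) = (a, b)" by (cases "quotient_of (q f)")
    have b: "b > 0" by (rule quotient_of_denom_pos[OF ab])
    have qf: "q f = of_int a / of_int b" by (rule quotient_of_div[OF ab])
    then have qa: "q f * of_int b = of_int a" using b by simp
    have "of_int a \<ge> (0::rat)" unfolding qa[symmetric] using q(1) f b by simp
    then have "a \<ge> 0" by simp
    then show "\<exists>d. d > 0 \<and> (\<exists>n. q f * of_nat d = of_nat n)" using qa b
      by (intro exI[of _ "nat b"] conjI exI[of _ "nat a"]) simp_all
  qed
  then obtain dd where "\<forall>f\<in>F. dd f > 0 \<and> (\<exists>n. q f * of_nat (dd f) = of_nat n)" by (rule bchoice[THEN exE])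
  then have "\<forall>f\<in>F. \<exists>n. dd f > 0 \<and> q f * of_nat (dd f) = of_nat n" by blast
  then obtain nn where dn: "\<forall>f\<in>F. dd f > 0 \<and> q f * of_nat (dd f) = of_nat (nn f)" by (rule bchoice[THEN exE])
  define D where "D = (\<Prod>f\<in>F. dd f)"
  have Dpos: "D > 0" using dn unfolding D_def by (intro prod_pos) blast
  define N where "N f = nn f * (\<Prod>g\<in>F-{f}. dd g)" for f
  have qD: "q f * of_nat D = of_nat (N f)" if f: "f \<in> F" for f
  proof -
    have e: "q f * of_nat (dd f) = of_nat (nn f)" using dn f by blast
    have "q f * of_nat D = (q f * of_nat (dd f)) * of_nat (\<Prod>g\<in>F-{f}. dd g)"
      unfolding D_def prod.remove[OF finF f] by (simp add: mult.assoc)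
    also have "\<dots> = of_nat (N f)" unfolding e N_def by simp
    finally show ?thesis .
  qed
  have vz: "int (v j) = z j" for j unfolding v_def using znn by simp
  have DV: "D * v j = (\<Sum>f\<in>F. N f * f j)" for j
  proof -
    have "rat_of_nat (v j) = rat_of_int (z j)" unfolding v_def using znn[of j] by simp
    then have "rat_of_nat (D * v j) = of_nat D * (\<Sum>f\<in>F. q f * of_nat (f j))" using qj by simp
    also have "\<dots> = (\<Sum>f\<in>F. (q f * of_nat D) * of_nat (f j))"
      unfolding sum_distrib_left by (rule sum.cong) (simp_all add: mult_ac)
    also have "\<dots> = (\<Sum>f\<in>F. of_nat (N f) * of_nat (f j))" by (rule sum.cong) (simp_all add: qD)
    also have "\<dots> = rat_of_nat (\<Sum>f\<in>F. N f * f j)" by simp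
    finally show ?thesis by (simp only: of_nat_eq_iff)
  qed
  define x where "x j = b0 j + (\<Sum>f\<in>F. (D * nat \<bar>c f\<bar>) * f j)" for j
  have "v \<in> Pumps L" unfolding Pumps_def
  proof (intro CollectI exI[of _ x] allI)
    fix k :: nat
    define r where "r = k mod D"
    define t where "t = k div D"
    have rD: "r < D" unfolding r_def using Dpos by simp
    have kk: "int k = int r + int t * int D"
      unfolding r_def t_def by (metis div_mult_mod_eq add.commute of_nat_add of_nat_mult)
    have nonneg: "0 \<le> int D * \<bar>c f\<bar> + int r * c f" for f
    proof -
      have "- (int r * c f) = int r * (- c f)" by simp
      also have "\<dots> \<le> int r * \<bar>c f\<bar>" by (intro mult_left_mono) simp_all
      also have "\<dots> \<le> int D * \<bar>c f\<bar>" using rD by (intro mult_right_mono) simp_all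
      finally show ?thesis by simp
    qed
    define \<mu> where "\<mu> f = nat (int D * \<bar>c f\<bar> + int r * c f) + t * N f" for f
    have m: "int (\<mu> f) = int D * \<bar>c f\<bar> + int r * c f + int t * int (N f)" for f
      unfolding \<mu>_def using nonneg[of f] by simp
    have eq: "x j + k * v j = b0 j + (\<Sum>f\<in>F. \<mu> f * f j)" for j
    proof -
      have s1: "(\<Sum>f\<in>F. int (\<mu> f) * int (f j)) = (\<Sum>f\<in>F. int D * \<bar>c f\<bar> * int (f j))
          + int r * (\<Sum>f\<in>F. c f * int (f j)) + int t * (\<Sum>f\<in>F. int (N f) * int (f j))"
        by (simp add: m sum.distrib sum_distrib_left algebra_simps)
      have s2: "int (x j) = int (b0 j) + (\<Sum>f\<in>F. int D * \<bar>c f\<bar> * int (f j))"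
        unfolding x_def by simp
      have s3: "int r * z j = int r * (\<Sum>f\<in>F. c f * int (f j))" using c by simp
      have s4: "int t * (int D * z j) = int t * (\<Sum>f\<in>F. int (N f) * int (f j))"
        using arg_cong[OF DV[of j], of int] vz[of j] by simp
      have s5: "int k * z j = int r * z j + int t * (int D * z j)" unfolding kk by (simp add: algebra_simps)
      have l: "int (x j + k * v j) = int (x j) + int k * z j" using vz[of j] by simp
      have rr: "int (b0 j + (\<Sum>f\<in>F. \<mu> f * f j)) = int (b0 j) + (\<Sum>f\<in>F. int (\<mu> f) * int (f j))" by simp
      have "int (x j + k * v j) = int (b0 j + (\<Sum>f\<in>F. \<mu> f * f j))"
        unfolding l rr using s1 s2 s3 s4 s5 by linarith
      then show ?thesis by (simp only: of_nat_eq_iff)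
    qed
    have u: "(\<lambda>j. \<Sum>f\<in>F. \<mu> f * f j) \<in> NComb F" unfolding NComb_iff[OF finF] by blast
    show "(\<lambda>j. x j + k * v j) \<in> L" unfolding L mem_Collect_eq
      by (intro exI[of _ b0] exI[of _ "\<lambda>j. \<Sum>f\<in>F. \<mu> f * f j"] conjI) (simp_all add: eq u b0)
  qed
  then show ?thesis using zv by blast
qed


theorem mainTheorem18:
  fixes B F :: "('n::finite \<Rightarrow> nat) set" and L :: "('n \<Rightarrow> nat) set"
  assumes "finite B" and "finite F" and "B \<noteq> {}"
    and "L = {(\<lambda>j. b j + u j) | b u. b \<in> B \<and> u \<in> NComb F}"
    and "\<forall>b\<in>B. \<forall>b'\<in>B. (\<lambda>j. int (b j) - int (b' j)) \<in> ZComb F"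
  shows "(embed ` Pumps L :: ('n \<Rightarrow> int) set) =
         {z. z \<in> ZComb F \<and> (\<lambda>j. rat_of_int (z j)) \<in> QComb F}"
proof
  show "(embed ` Pumps L :: ('n \<Rightarrow> int) set) \<subseteq> {z. z \<in> ZComb F \<and> (\<lambda>j. rat_of_int (z j)) \<in> QComb F}"
    using pumps_sub[OF assms(1,2,4,5)] by blast
next
  obtain b0 where b0: "b0 \<in> B" using assms(3) by blast
  show "{z. z \<in> ZComb F \<and> (\<lambda>j. rat_of_int (z j)) \<in> QComb F} \<subseteq> (embed ` Pumps L :: ('n \<Rightarrow> int) set)"
    using pumps_sup[OF assms(2) b0 assms(4)] by blast
qed

end
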